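(* For all nonnegative integers $a,b,c$ with $a+b+c=d+1$, the following equalities hold in $\mathcal{B}_d$: $$f^{(a)}\binom{H_2}{b}e^{(c)}=\sum_{k=1}^{\min(a,c)}(-1)^{k-1}\binom{b+k}{k}f^{(a-k)}\binom{H_2}{b+k}e^{(c-k)},$$ $$e^{(a)}\binom{H_1}{b}f^{(c)}=\sum_{k=1}^{\min(a,c)}(-1)^{k-1}\binom{b+k}{k}e^{(a-k)}\binom{H_1}{b+k}f^{(c-k)}$$ (an empty sum being $0$).
   Context: Fix an integer $d\ge 0$. $\mathcal{B}_d$ is the associative $\mathbb{Q}$-algebra with $1$ generated by $e,f,H_1,H_2$ subject to the relations $H_1H_2=H_2H_1$, $H_1e-eH_1=e$, $H_1f-fH_1=-f$, $H_2e-eH_2=-e$, $H_2f-fH_2=f$, $ef-fe=H_1-H_2$, $H_1+H_2=d$, and $H_1(H_1-1)\cdots(H_1-d)=0$. For an element $T$ and integer $m\ge 0$, $T^{(m)}=T^m/m!$ and $\binom{T}{m}=T(T-1)\cdots(T-m+1)/m!$; both are defined to be $0$ for negative $m$. *)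

theory Defs
  imports Main
begin

text \<open>A ring with 1 is a Q-algebra exactly when every positive integer is invertible
  (the Q-algebra structure is then unique).\<close>
definition is_Q_algebra :: "'a::ring_1 itself \<Rightarrow> bool" where
  "is_Q_algebra _ \<longleftrightarrow> (\<forall>n::nat. n > 0 \<longrightarrow> (\<exists>y::'a. of_nat n * y = 1 \<and> y * of_nat n = 1))"

definition nat_inv :: "nat \<Rightarrow> 'a::ring_1" where
  "nat_inv n = (SOME y. of_nat n * y = 1 \<and> y * of_nat n = 1)"

definition dpow :: "'a::ring_1 \<Rightarrow> nat \<Rightarrow> 'a" where
  "dpow T m = nat_inv (fact m) * T ^ m"

fun falling :: "'a::ring_1 \<Rightarrow> nat \<Rightarrow> 'a" where
  "falling T 0 = 1"
| "falling T (Suc m) = falling T m * (T - of_nat m)"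

definition binom :: "'a::ring_1 \<Rightarrow> nat \<Rightarrow> 'a" where
  "binom T m = nat_inv (fact m) * falling T m"

definition Bd_rel :: "nat \<Rightarrow> 'a::ring_1 \<Rightarrow> 'a \<Rightarrow> 'a \<Rightarrow> 'a \<Rightarrow> bool" where
  "Bd_rel d e f H1 H2 \<longleftrightarrow>
     H1 * H2 = H2 * H1 \<and>
     H1 * e - e * H1 = e \<and>
     H1 * f - f * H1 = - f \<and>
     H2 * e - e * H2 = - e \<and>
     H2 * f - f * H2 = f \<and>
     e * f - f * e = H1 - H2 \<and>
     H1 + H2 = of_nat d \<and>
     falling H1 (Suc d) = 0"

end

theory Submission
  imports Defs "HOL-Computational_Algebra.Formal_Power_Series"
begin


definition qr :: "rat \<Rightarrow> 'a::ring_1" where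
  "qr q = of_int (fst (quotient_of q)) * nat_inv (nat (snd (quotient_of q)))"

locale Bd =
  fixes d :: nat and e f H1 H2 :: "'a::ring_1"
  assumes QA: "is_Q_algebra TYPE('a)"
    and R: "Bd_rel d e f H1 H2"
begin

lemma inv_ok: "n > 0 \<Longrightarrow> of_nat n * (nat_inv n :: 'a) = 1 \<and> nat_inv n * of_nat n = (1::'a)"
  using QA unfolding is_Q_algebra_def nat_inv_def by (metis (mono_tags, lifting) someI_ex)

lemma inv_central: "n > 0 \<Longrightarrow> (nat_inv n :: 'a) * x = x * nat_inv n"
proof -
  assume n: "n > 0"
  have "(nat_inv n :: 'a) * x = nat_inv n * x * (of_nat n * nat_inv n)" using inv_ok[OF n] by simp
  also have "\<dots> = nat_inv n * (of_nat n * x) * nat_inv n" by (simp add: mult.assoc mult_of_nat_commute)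
  also have "\<dots> = x * nat_inv n" using inv_ok[OF n] by (simp add: mult.assoc[symmetric])
  finally show ?thesis .
qed

lemma cancel_nat: "n > 0 \<Longrightarrow> y * of_nat n = z * (of_nat n :: 'a) \<Longrightarrow> y = z"
  by (metis inv_ok mult.assoc mult_1_right)

lemma qr_den: assumes "m > 0" "q = of_int n / of_nat m"
  shows "qr q * of_nat m = (of_int n :: 'a)"
proof -
  obtain n0 m0 where qo: "quotient_of q = (n0, m0)" by (cases "quotient_of q")
  have m0: "m0 > 0" using quotient_of_denom_pos[OF qo] .
  have q0: "q = of_int n0 / of_int m0" using quotient_of_div[OF qo] .
  have "of_int n0 * of_int (int m) = (of_int n * of_int m0 :: rat)"
    using assms q0 m0 by (auto simp: field_simps)
  hence eq: "n0 * int m = n * m0" by (metis of_int_eq_iff of_int_mult)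
  have mm: "of_nat (nat m0) = (of_int m0 :: 'a)" using m0 by simp
  have "qr q * of_nat m = of_int n0 * nat_inv (nat m0) * (of_nat m :: 'a)"
    by (simp add: qr_def qo)
  also have "\<dots> = nat_inv (nat m0) * of_int (n0 * int m)"
    using inv_central[of "nat m0"] m0 by (simp add: mult.assoc)
  also have "\<dots> = nat_inv (nat m0) * (of_nat (nat m0) * of_int n)"
    using eq mm by (simp add: mult.commute)
  also have "\<dots> = of_int n" using inv_ok[of "nat m0"] m0 by (simp add: mult.assoc[symmetric])
  finally show ?thesis .
qed

lemma qr_char: assumes "m > 0" "q = of_int n / of_nat m" "y * of_nat m = (of_int n :: 'a)"
  shows "qr q = y"
  using qr_den[OF assms(1,2)] assms(3) cancel_nat[OF assms(1)] by metis

lemma comm_mult: "a * x = x * a \<Longrightarrow> b * x = x * b \<Longrightarrow> (a * b) * x = x * (a * (b::'a))"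
  by (metis mult.assoc)

lemma qr_central: "qr (q::rat) * x = x * (qr q :: 'a)"
proof -
  have p: "nat (snd (quotient_of q)) > 0" using quotient_of_denom_pos' by simp
  show ?thesis unfolding qr_def
    by (rule comm_mult) (simp_all add: inv_central[OF p] mult_of_int_commute)
qed

lemma rat_rep: obtains n m where "m > 0" "(q::rat) = of_int n / of_nat (m::nat)"
proof -
  obtain n0 m0 where qo: "quotient_of q = (n0, m0)" by (cases "quotient_of q")
  have m0: "m0 > 0" using quotient_of_denom_pos[OF qo] .
  have "q = of_int n0 / of_nat (nat m0)" using quotient_of_div[OF qo] m0 by simp
  moreover have "nat m0 > 0" using m0 by simp
  ultimately show ?thesis using that by blast
qed

lemma qr_add: "qr (x + y) = qr x + (qr y :: 'a)"
proof -
  obtain a b where ab: "b > 0" "x = of_int a / of_nat b" by (rule rat_rep)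
  obtain c k where ck: "k > 0" "y = of_int c / of_nat k" by (rule rat_rep)
  have h1: "x + y = of_int (a * k + c * b) / of_nat (b * k)" using ab ck by (simp add: field_simps)
  have h2: "(qr x + qr y) * of_nat (b * k) = (of_int (a * k + c * b) :: 'a)"
  proof -
    have bk: "(of_nat (b * k) :: 'a) = of_nat b * of_nat k" "(of_nat (b * k) :: 'a) = of_nat k * of_nat b"
      by (simp_all only: of_nat_mult[symmetric] mult.commute)
    have e1: "qr x * (of_nat (b * k) :: 'a) = qr x * of_nat b * of_nat k" by (simp only: bk(1) mult.assoc)
    have e2: "qr y * (of_nat (b * k) :: 'a) = qr y * of_nat k * of_nat b" by (simp only: bk(2) mult.assoc)
    have "(qr x + qr y) * of_nat (b * k) = qr x * of_nat (b * k) + qr y * (of_nat (b * k) :: 'a)"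
      by (simp only: distrib_right)
    also have "\<dots> = qr x * of_nat b * of_nat k + qr y * of_nat k * (of_nat b :: 'a)"
      by (simp only: e1 e2)
    also have "\<dots> = of_int a * of_nat k + of_int c * of_nat b"
      using qr_den[OF ab] qr_den[OF ck] by simp
    finally show ?thesis by simp
  qed
  show ?thesis using qr_char[OF _ h1 h2] ab ck by simp
qed

lemma qr_mult: "qr (x * y) = qr x * (qr y :: 'a)"
proof -
  obtain a b where ab: "b > 0" "x = of_int a / of_nat b" by (rule rat_rep)
  obtain c k where ck: "k > 0" "y = of_int c / of_nat k" by (rule rat_rep)
  have h1: "x * y = of_int (a * c) / of_nat (b * k)" using ab ck by (simp add: field_simps)
  have h2: "(qr x * qr y) * of_nat (b * k) = (of_int (a * c) :: 'a)"
  proof -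
    have bk: "(of_nat (b * k) :: 'a) = of_nat k * of_nat b"
      by (simp_all only: of_nat_mult[symmetric] mult.commute)
    have "(qr x * qr y) * of_nat (b * k) = qr x * (qr y * of_nat k) * (of_nat b :: 'a)"
      by (simp only: bk mult.assoc)
    also have "\<dots> = (qr x * of_int c) * of_nat b"
      using qr_den[OF ck] by simp
    also have "\<dots> = of_int c * (qr x * of_nat b)"
      by (simp only: mult_of_int_commute[symmetric] mult.assoc)
    also have "\<dots> = of_int c * of_int a" using qr_den[OF ab] by simp
    finally show ?thesis by (metis of_int_mult mult.commute)
  qed
  show ?thesis using qr_char[OF _ h1 h2] ab ck by simp
qed

lemma qr_of_int [simp]: "qr (of_int n) = (of_int n :: 'a)"
  by (rule qr_char[of 1]) auto

lemma qr_of_nat [simp]: "qr (of_nat n) = (of_nat n :: 'a)"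
  using qr_of_int[of "int n"] by simp

lemma qr_0 [simp]: "qr 0 = (0::'a)" using qr_of_int[of 0] by simp
lemma qr_1 [simp]: "qr 1 = (1::'a)" using qr_of_int[of 1] by simp

lemma qr_uminus: "qr (- x) = - (qr x :: 'a)"
  using qr_add[of x "-x"] by (simp add: add_eq_0_iff2)

lemma qr_diff: "qr (x - y) = qr x - (qr y :: 'a)"
  using qr_add[of x "-y"] qr_uminus by simp

lemma qr_inv_nat: "n > 0 \<Longrightarrow> qr (1 / of_nat n) = (nat_inv n :: 'a)"
  by (rule qr_char[of n _ 1]) (use inv_ok in auto)

lemma qr_nonzero_cancel: "x \<noteq> 0 \<Longrightarrow> qr x * v = 0 \<Longrightarrow> v = (0::'a)"
proof -
  assume "x \<noteq> 0" "qr x * v = 0"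
  have "v = qr (1/x * x) * v" using \<open>x \<noteq> 0\<close> by simp
  also have "\<dots> = qr (1/x) * (qr x * v)" by (simp only: qr_mult mult.assoc)
  finally show ?thesis using \<open>qr x * v = 0\<close> by simp
qed

lemma qr_fact: "qr (1 / fact m) = (nat_inv (fact m) :: 'a)"
  using qr_inv_nat[of "fact m"] by simp

lemma dpow_qr: "dpow (T::'a) m = qr (1 / fact m) * T ^ m"
  unfolding dpow_def qr_fact ..

lemma binom_qr: "binom (T::'a) m = qr (1 / fact m) * falling T m"
  unfolding binom_def qr_fact ..

end



context Bd begin

lemma rel_H1e: "H1 * e = e * H1 + e" using R unfolding Bd_rel_def by (simp add: algebra_simps)
lemma rel_H1f: "H1 * f = f * H1 - f" using R unfolding Bd_rel_def by (simp add: algebra_simps)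
lemma rel_H2: "H2 = of_nat d - H1" using R unfolding Bd_rel_def by (simp add: algebra_simps)
lemma rel_ef: "e * f = f * e + H1 - H2" using R unfolding Bd_rel_def by (simp add: algebra_simps)
lemma rel_Z: "falling H1 (Suc d) = 0" using R unfolding Bd_rel_def by simp

definition wt :: "int \<Rightarrow> 'a \<Rightarrow> bool" where "wt j v \<longleftrightarrow> H1 * v = of_int j * v"

lemma wt_e: "wt j v \<Longrightarrow> wt (j + 1) (e * v)"
proof -
  assume "wt j v"
  have "H1 * (e * v) = (e * H1 + e) * v" by (simp add: mult.assoc[symmetric] rel_H1e)
  also have "\<dots> = e * (H1 * v) + e * v" by (simp add: distrib_right mult.assoc)
  also have "\<dots> = e * (of_int j * v) + e * v" using \<open>wt j v\<close> unfolding wt_def by simp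
  also have "\<dots> = of_int j * (e * v) + e * v" by (metis mult.assoc mult_of_int_commute)
  also have "\<dots> = of_int (j + 1) * (e * v)"
    by (simp add: distrib_right)
  finally show ?thesis unfolding wt_def .
qed

lemma wt_f: "wt j v \<Longrightarrow> wt (j - 1) (f * v)"
proof -
  assume "wt j v"
  have "H1 * (f * v) = (f * H1 - f) * v" by (simp add: mult.assoc[symmetric] rel_H1f)
  also have "\<dots> = f * (H1 * v) - f * v" by (simp add: left_diff_distrib mult.assoc)
  also have "\<dots> = f * (of_int j * v) - f * v" using \<open>wt j v\<close> unfolding wt_def by simp
  also have "\<dots> = of_int j * (f * v) - f * v" by (metis mult.assoc mult_of_int_commute)
  also have "\<dots> = of_int (j - 1) * (f * v)"
    by (simp add: left_diff_distrib)
  finally show ?thesis unfolding wt_def .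
qed

lemma wt_qr: "wt j v \<Longrightarrow> wt j (qr q * v)"
  unfolding wt_def by (metis mult.assoc qr_central)

lemma wt_0: "wt j 0" unfolding wt_def by simp

lemma wt_add: "wt j v \<Longrightarrow> wt j w \<Longrightarrow> wt j (v + w)"
  unfolding wt_def by (simp add: distrib_left)

lemma wt_epow: "wt j v \<Longrightarrow> wt (j + int n) (e ^ n * v)"
proof (induction n)
  case 0 then show ?case by simp
next
  case (Suc n)
  have "wt (j + int n + 1) (e * (e ^ n * v))" using wt_e[OF Suc.IH[OF Suc.prems]] .
  then show ?case by (simp add: mult.assoc power_Suc ac_simps)
qed

lemma wt_fpow: "wt j v \<Longrightarrow> wt (j - int n) (f ^ n * v)"
proof (induction n)
  case 0 then show ?case by simp
next
  case (Suc n)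
  have "wt (j - int n - 1) (f * (f ^ n * v))" using wt_f[OF Suc.IH[OF Suc.prems]] .
  then show ?case by (simp add: mult.assoc power_Suc algebra_simps)
qed

lemma wt_de: "wt j v \<Longrightarrow> wt (j + int n) (dpow e n * v)"
  unfolding dpow_qr by (simp add: mult.assoc wt_qr wt_epow)

lemma wt_df: "wt j v \<Longrightarrow> wt (j - int n) (dpow f n * v)"
  unfolding dpow_qr by (simp add: mult.assoc wt_qr wt_fpow)

lemma H1_wt: "wt j v \<Longrightarrow> H1 * v = qr (of_int j) * v"
  unfolding wt_def by simp

lemma H2_wt: "wt j v \<Longrightarrow> H2 * v = qr (of_int (int d - j)) * v"
  unfolding wt_def rel_H2 by (simp add: left_diff_distrib qr_diff)

lemma falling_eig: "(T::'a) * v = qr x * v \<Longrightarrow> falling T n * v = qr (\<Prod>i<n. x - of_nat i) * v"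
proof (induction n)
  case 0 then show ?case by simp
next
  case (Suc n)
  have "falling T (Suc n) * v = falling T n * (T * v - of_nat n * v)"
    by (simp add: mult.assoc left_diff_distrib right_diff_distrib)
  also have "\<dots> = falling T n * (qr (x - of_nat n) * v)"
    using Suc.prems by (simp add: qr_diff left_diff_distrib)
  also have "\<dots> = qr (x - of_nat n) * (falling T n * v)"
    by (metis mult.assoc qr_central)
  also have "\<dots> = qr (x - of_nat n) * (qr (\<Prod>i<n. x - of_nat i) * v)"
    using Suc by simp
  also have "\<dots> = qr (\<Prod>i<Suc n. x - of_nat i) * v"
    by (simp add: mult.assoc[symmetric] qr_mult[symmetric] mult.commute)
  finally show ?case .
qed

lemma binom_eig: "(T::'a) * v = qr x * v \<Longrightarrow> binom T n * v = qr (x gchoose n) * v"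
proof -
  assume a: "T * v = qr x * v"
  have "binom T n * v = qr (1 / fact n) * (qr (\<Prod>i<n. x - of_nat i) * v)"
    unfolding binom_qr by (simp add: mult.assoc falling_eig[OF a])
  also have "\<dots> = qr (x gchoose n) * v"
    by (simp add: mult.assoc[symmetric] qr_mult[symmetric] gbinomial_prod_rev atLeast0LessThan)
  finally show ?thesis .
qed

lemma wt_vanish: assumes "wt j v" "j < 0 \<or> j > int d" shows "v = 0"
proof -
  have "0 = falling H1 (Suc d) * v" by (simp only: rel_Z mult_zero_left)
  also have "\<dots> = qr (\<Prod>i<Suc d. of_int j - of_nat i) * v"
    by (rule falling_eig) (use H1_wt[OF assms(1)] in simp)
  finally have z: "qr (\<Prod>i<Suc d. of_int j - of_nat i) * v = 0" by simp
  have "(\<Prod>i<Suc d. (of_int j - of_nat i :: rat)) \<noteq> 0"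
    using assms(2) by (auto simp: prod_zero_iff)
  then show ?thesis using qr_nonzero_cancel z by blast
qed

end



context Bd begin

lemma falling_split: "falling (T::'a) (p + q) = falling T p * falling (T - of_nat p) q"
proof (induction q)
  case 0 then show ?case by simp
next
  case (Suc q)
  have "falling T (p + Suc q) = falling T (p + q) * (T - of_nat (p + q))" by simp
  also have "\<dots> = falling T p * (falling (T - of_nat p) q * (T - of_nat p - of_nat q))"
    using Suc by (simp add: mult.assoc algebra_simps)
  finally show ?case by (simp add: mult.assoc)
qed

lemma comm_diff: "(T::'a) * (T - of_nat k) = (T - of_nat k) * T"
  by (simp add: right_diff_distrib left_diff_distrib mult_of_nat_commute)

lemma comm_falling: "(T::'a) * falling T n = falling T n * T"
proof (induction n)
  case 0 then show ?case by simp
next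
  case (Suc n)
  have "T * falling T (Suc n) = (T * falling T n) * (T - of_nat n)" by (simp add: mult.assoc)
  also have "\<dots> = falling T n * (T * (T - of_nat n))" using Suc by (simp add: mult.assoc)
  also have "\<dots> = falling T (Suc n) * T" by (simp add: comm_diff mult.assoc)
  finally show ?case .
qed

lemma rwt_falling:
  assumes "Y * (T::'a) = qr \<mu> * Y"
  shows "Y * falling (T - of_nat k) n = qr (\<Prod>i<n. \<mu> - of_nat k - of_nat i) * Y"
proof (induction n)
  case 0 then show ?case by simp
next
  case (Suc n)
  have "Y * falling (T - of_nat k) (Suc n) = (Y * falling (T - of_nat k) n) * (T - of_nat k - of_nat n)"
    by (simp add: mult.assoc)
  also have "\<dots> = qr (\<Prod>i<n. \<mu> - of_nat k - of_nat i) * (Y * T - Y * of_nat k - Y * of_nat n)"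
    using Suc by (simp add: mult.assoc right_diff_distrib)
  also have "Y * T - Y * of_nat k - Y * of_nat n = qr (\<mu> - of_nat k - of_nat n) * Y"
    using assms by (simp add: qr_diff left_diff_distrib mult_of_nat_commute)
  finally show ?case by (simp add: mult.assoc[symmetric] qr_mult[symmetric] mult.commute)
qed

lemma peel:
  assumes h: "\<And>j v. wt j v \<Longrightarrow> X * v = 0"
  shows "X = 0"
proof -
  have main: "i \<le> Suc d \<Longrightarrow> X * falling H1 (Suc d - i) = 0" for i
  proof (induction i)
    case 0 then show ?case by (simp only: diff_zero rel_Z mult_zero_right)
  next
    case (Suc i)
    define m where "m = d - i"
    have m1: "Suc d - i = Suc m" and m2: "Suc d - Suc i = m" using Suc.prems by (auto simp: m_def)
    have IH: "X * falling H1 (Suc m) = 0" using Suc m1 by simp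
    define Y where "Y = X * falling H1 m"
    have Y0: "Y * (H1 - of_nat m) = 0" using IH unfolding Y_def by (simp add: mult.assoc)
    have YH: "Y * H1 = qr (of_nat m) * Y"
    proof -
      have "Y * H1 = Y * (H1 - of_nat m) + Y * of_nat m" by (simp add: right_diff_distrib)
      then show ?thesis using Y0 by (simp add: mult_of_nat_commute)
    qed
    define G where "G = falling (H1 - of_nat (Suc m)) (d - m)"
    have FG: "falling H1 (Suc m) * G = 0"
    proof -
      have "falling H1 (Suc m) * G = falling H1 (Suc m + (d - m))"
        unfolding G_def by (rule falling_split[symmetric])
      also have "Suc m + (d - m) = Suc d" using m_def by simp
      finally show ?thesis using rel_Z by simp
    qed
    have wtw: "wt (int m) (falling H1 m * G)"
    proof -
      have "H1 * (falling H1 m * G) = falling H1 m * (H1 - of_nat m) * G + falling H1 m * (of_nat m * G)"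
        by (simp add: mult.assoc[symmetric] comm_falling left_diff_distrib right_diff_distrib)
      also have "\<dots> = of_nat m * (falling H1 m * G)"
      proof -
        have z: "falling H1 m * (H1 - of_nat m) * G = 0" using FG by simp
        have c: "falling H1 m * (of_nat m * G) = of_nat m * (falling H1 m * G)"
          by (metis mult.assoc mult_of_nat_commute)
        show ?thesis by (simp only: z c add_0_left)
      qed
      finally show ?thesis unfolding wt_def by simp
    qed
    have "Y * G = 0" using h[OF wtw] unfolding Y_def by (simp add: mult.assoc)
    moreover have "Y * G = qr (\<Prod>i<d - m. of_nat m - of_nat (Suc m) - of_nat i) * Y"
      unfolding G_def by (rule rwt_falling[OF YH])
    moreover have "(\<Prod>i<d - m. of_nat m - of_nat (Suc m) - of_nat i :: rat) \<noteq> 0"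
      by (simp add: prod_zero_iff)
    ultimately have "Y = 0" using qr_nonzero_cancel by metis
    then show ?case using m2 Y_def by simp
  qed
  from main[of "Suc d"] show ?thesis by simp
qed

end



context Bd begin

lemma qr_left: "Y * (qr c * Z) = qr c * ((Y::'a) * Z)"
  by (metis mult.assoc qr_central)

lemma lc_add: "(\<Sum>t\<in>S. qr (a t) * X t) + (\<Sum>t\<in>S. qr (b t) * X t) = (\<Sum>t\<in>S. qr (a t + b t) * (X t :: 'a))"
  by (simp add: sum.distrib[symmetric] qr_add distrib_right)

lemma lc_scale: "qr c * (\<Sum>t\<in>S. qr (a t) * X t) = (\<Sum>t\<in>S. qr (c * a t) * (X t :: 'a))"
  by (simp add: sum_distrib_left qr_mult mult.assoc)

lemma left_sum: "Y * (\<Sum>t\<in>S. qr (a t) * X t) = (\<Sum>t\<in>S. qr (a t) * (Y * (X t :: 'a)))"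
  by (simp add: sum_distrib_left qr_left)

lemma HH_wt: assumes "wt j x" shows "(H1 - H2) * x = qr (of_int (2 * j - int d)) * x"
proof -
  have "(H1 - H2) * x = qr (of_int j) * x - qr (of_int (int d - j)) * x"
    using H1_wt[OF assms] H2_wt[OF assms] by (simp only: left_diff_distrib)
  also have "\<dots> = qr (of_int j - of_int (int d - j)) * x" by (simp only: qr_diff left_diff_distrib)
  also have "(of_int j - of_int (int d - j) :: rat) = of_int (2 * j - int d)" by simp
  finally show ?thesis .
qed

lemma rel_fe: "f * e = e * f - (H1 - H2)"
  using rel_ef by (simp add: algebra_simps)

lemma K1raw: "wt j w \<Longrightarrow> f * (e ^ s * w) = e ^ s * (f * w)
   + qr (of_int (int s * (int d - 2 * j - int s + 1))) * (e ^ (s - 1) * w)"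
proof (induction s)
  case 0 then show ?case by simp
next
  case (Suc s)
  let ?c = "of_int (int s * (int d - 2 * j - int s + 1)) :: rat"
  have wX: "wt (j + int s) (e ^ s * w)" using wt_epow[OF Suc.prems] .
  have eq1: "f * (e ^ Suc s * w) = e * (f * (e ^ s * w)) - (H1 - H2) * (e ^ s * w)"
    by (simp add: mult.assoc[symmetric] rel_fe left_diff_distrib)
  have eq2: "e * (qr ?c * (e ^ (s - 1) * w)) = qr ?c * (e ^ s * w)"
  proof (cases s)
    case 0 then show ?thesis by simp
  next
    case (Suc s') then show ?thesis by (simp only: qr_left) (simp add: mult.assoc)
  qed
  have "f * (e ^ Suc s * w) = e ^ Suc s * (f * w) + qr ?c * (e ^ s * w)
        - qr (of_int (2 * (j + int s) - int d)) * (e ^ s * w)"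
  proof -
    have "f * (e ^ Suc s * w) = e * (e ^ s * (f * w) + qr ?c * (e ^ (s - 1) * w))
        - qr (of_int (2 * (j + int s) - int d)) * (e ^ s * w)"
      by (simp only: eq1 Suc.IH[OF Suc.prems] HH_wt[OF wX])
    also have "\<dots> = e * (e ^ s * (f * w)) + qr ?c * (e ^ s * w)
        - qr (of_int (2 * (j + int s) - int d)) * (e ^ s * w)"
      by (simp only: distrib_left[of e] eq2)
    finally show ?thesis by (simp only: mult.assoc power_Suc)
  qed
  also have "\<dots> = e ^ Suc s * (f * w)
     + qr (of_int (int (Suc s) * (int d - 2 * j - int (Suc s) + 1))) * (e ^ (Suc s - 1) * w)"
  proof -
    have ii: "int s * (int d - 2 * j - int s + 1) - (2 * (j + int s) - int d)
       = int (Suc s) * (int d - 2 * j - int (Suc s) + 1)" by (simp add: algebra_simps)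
    have "qr ?c * (e ^ s * w) - qr (of_int (2 * (j + int s) - int d)) * (e ^ s * w)
       = qr (?c - of_int (2 * (j + int s) - int d)) * (e ^ s * w)"
      by (simp only: qr_diff left_diff_distrib)
    also have "?c - of_int (2 * (j + int s) - int d) = of_int (int (Suc s) * (int d - 2 * j - int (Suc s) + 1))"
      using ii by (metis of_int_diff)
    finally show ?thesis by (simp only: diff_Suc_1 add_diff_eq[symmetric])
  qed
  finally show ?case .
qed

definition ep :: "int \<Rightarrow> 'a" where "ep n = (if n < 0 then 0 else dpow e (nat n))"

lemma dpow_Suc': "dpow (T::'a) (Suc p) = qr (1 / of_nat (Suc p)) * (T * dpow T p)"
proof -
  have fs: "(1 / fact (Suc p) :: rat) = 1 / of_nat (Suc p) * (1 / fact p)"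
    by (simp only: fact_Suc) simp
  have "dpow T (Suc p) = qr (1 / of_nat (Suc p)) * (qr (1 / fact p) * (T * T ^ p))"
    unfolding dpow_qr fs by (simp only: qr_mult mult.assoc power_Suc)
  also have "\<dots> = qr (1 / of_nat (Suc p)) * (T * dpow T p)"
    unfolding dpow_qr by (simp only: qr_left[of T, symmetric] mult.assoc)
  finally show ?thesis .
qed

lemma dpow_left: "(T::'a) * dpow T p = qr (of_nat (Suc p)) * dpow T (Suc p)"
proof -
  have "qr (of_nat (Suc p)) * dpow T (Suc p) = qr (of_nat (Suc p) * (1 / of_nat (Suc p))) * (T * dpow T p)"
    by (simp only: dpow_Suc' mult.assoc[symmetric] qr_mult)
  also have "(of_nat (Suc p) * (1 / of_nat (Suc p)) :: rat) = 1" by simp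
  finally show ?thesis by simp
qed

lemma K1: assumes "wt j w"
  shows "f * (ep n * w) = ep n * (f * w) + qr (of_int (int d - 2 * j - n + 1)) * (ep (n - 1) * w)"
proof -
  have "n < 0 \<or> n = 0 \<or> n = int (Suc (nat n - 1))" by linarith
  then consider "n < 0" | "n = 0" | s where "n = int (Suc s)" by blast
  then show ?thesis
  proof cases
    case 1 then show ?thesis by (simp add: ep_def)
  next
    case 2 then show ?thesis by (simp add: ep_def dpow_qr)
  next
    case 3
    define a :: rat where "a = 1 / fact (Suc s)"
    define c :: rat where "c = of_int (int (Suc s) * (int d - 2 * j - int (Suc s) + 1))"
    have en: "ep n = qr a * e ^ Suc s" and en1: "ep (n - 1) = qr (1 / fact s) * e ^ s"
    proof -
      have ns: "nat n = Suc s" "nat (n - 1) = s" and nl: "(n < 0) = False" "(n - 1 < 0) = False" using 3 by simp_all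
      show "ep n = qr a * e ^ Suc s" "ep (n - 1) = qr (1 / fact s) * e ^ s"
        by (simp_all only: ep_def ns nl dpow_qr a_def if_False)
    qed
    have "f * (ep n * w) = qr a * (f * (e ^ Suc s * w))"
      unfolding en by (simp only: qr_left[of f, symmetric] mult.assoc)
    also have "\<dots> = qr a * (e ^ Suc s * (f * w)) + qr a * (qr c * (e ^ s * w))"
      unfolding K1raw[OF assms, of "Suc s"] c_def by (simp only: distrib_left diff_Suc_1)
    also have "\<dots> = ep n * (f * w) + qr (a * c) * (e ^ s * w)"
      unfolding en by (simp only: mult.assoc qr_mult)
    also have "a * c = (of_int (int d - 2 * j - n + 1) :: rat) * (1 / fact s)"
    proof -
      have ci: "c = of_nat (Suc s) * of_int (int d - 2 * j - n + 1)"
        unfolding c_def using 3 by simp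
      have fa: "(fact (Suc s) :: rat) = of_nat (Suc s) * fact s" by (simp only: fact_Suc)
      have "a * c = 1 / (of_nat (Suc s) * fact s) * (of_nat (Suc s) * of_int (int d - 2 * j - n + 1))"
        unfolding a_def ci fa ..
      also have "\<dots> = of_int (int d - 2 * j - n + 1) * (1 / fact s)"
        by (simp del: of_nat_Suc)
      finally show ?thesis .
    qed
    finally show ?thesis unfolding en1 by (simp only: qr_mult mult.assoc)
  qed
qed

end



lemma gabs: "of_nat (Suc t) * ((L::rat) gchoose Suc t) = (L - of_nat t) * (L gchoose t)"
proof -
  have "fact (Suc t) * (L gchoose Suc t) = (\<Prod>i = 0..<Suc t. L - of_nat i)"
    by (rule gbinomial_mult_fact)
  also have "\<dots> = (\<Prod>i = 0..<t. L - of_nat i) * (L - of_nat t)" by simp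
  also have "\<dots> = fact t * (L gchoose t) * (L - of_nat t)" by (simp add: gbinomial_mult_fact)
  finally have "fact t * (of_nat (Suc t) * (L gchoose Suc t)) = fact t * ((L - of_nat t) * (L gchoose t))"
    by (simp add: fact_Suc algebra_simps del: of_nat_Suc)
  then show ?thesis by simp
qed

lemma coef_id:
  fixes L :: rat
  assumes "u \<le> Suc p"
  shows "1 / of_nat (Suc p) * ((L gchoose u) * (of_nat (Suc p) - of_nat u)
     + (if u = 0 then 0 else (L gchoose (u - 1)) * (L + of_nat p - of_nat (u - 1) + 1)))
   = (L + 1) gchoose u"
proof (cases u)
  case 0 then show ?thesis by simp
next
  case (Suc t)
  let ?X = "L gchoose t" and ?Y = "L gchoose Suc t"
  have ab: "of_nat (Suc t) * ?Y = (L - of_nat t) * ?X" by (rule gabs)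
  have "?Y * (of_nat (Suc p) - of_nat (Suc t)) + ?X * (L + of_nat p - of_nat t + 1)
     = of_nat (Suc p) * (?X + ?Y) + ((L - of_nat t) * ?X - of_nat (Suc t) * ?Y)"
    by (simp add: algebra_simps)
  also have "\<dots> = of_nat (Suc p) * (?X + ?Y)"
    using ab by simp
  also have "?X + ?Y = (L + 1) gchoose Suc t" by (rule gbinomial_Suc_Suc[symmetric])
  finally show ?thesis using Suc by simp
qed

context Bd begin

lemma wt_ep: "wt j v \<Longrightarrow> wt (j + n) (ep n * v)"
  unfolding ep_def using wt_de[of j v "nat n"] by (auto simp: wt_0)

lemma kostant:
  assumes v: "wt j v"
  shows "dpow f p * (ep s * v) = (\<Sum>t\<le>p. qr (of_int (int d - 2 * j + int p - s) gchoose t)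
            * (ep (s - int t) * (dpow f (p - t) * v)))"
proof (induction p)
  case 0 then show ?case by (simp add: dpow_qr)
next
  case (Suc p)
  define L :: rat where "L = of_int (int d - 2 * j + int p - s)"
  have L1: "(of_int (int d - 2 * j + int (Suc p) - s) :: rat) = L + 1" unfolding L_def by simp
  define A where "A u = ep (s - int u) * (dpow f (Suc p - u) * v)" for u
  define B where "B t = ep (s - int t) * (dpow f (p - t) * v)" for t
  define a :: "nat \<Rightarrow> rat" where "a u = of_nat (Suc p) - of_nat u" for u
  define b :: "nat \<Rightarrow> rat" where "b t = L + of_nat p - of_nat t + 1" for t
  have fB: "f * B t = qr (a t) * A t + qr (b t) * A (Suc t)" if tp: "t \<le> p" for t
  proof -
    have ww: "wt (j - int (p - t)) (dpow f (p - t) * v)" by (rule wt_df[OF v])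
    have "f * B t = ep (s - int t) * (f * (dpow f (p - t) * v))
       + qr (of_int (int d - 2 * (j - int (p - t)) - (s - int t) + 1)) * (ep (s - int t - 1) * (dpow f (p - t) * v))"
      unfolding B_def by (rule K1[OF ww])
    also have "f * (dpow f (p - t) * v) = qr (of_nat (Suc (p - t))) * (dpow f (Suc (p - t)) * v)"
      by (simp only: mult.assoc[symmetric] dpow_left)
    also have "ep (s - int t) * (qr (of_nat (Suc (p - t))) * (dpow f (Suc (p - t)) * v))
        = qr (a t) * A t"
    proof -
      have "Suc (p - t) = Suc p - t" using tp by simp
      moreover have "(of_nat (Suc (p - t)) :: rat) = a t" unfolding a_def using tp by (simp add: of_nat_diff)
      ultimately show ?thesis unfolding A_def by (simp only: qr_left)
    qed
    also have "(of_int (int d - 2 * (j - int (p - t)) - (s - int t) + 1) :: rat) = b t"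
      unfolding b_def L_def using tp by (simp add: of_nat_diff)
    also have "ep (s - int t - 1) * (dpow f (p - t) * v) = A (Suc t)"
      unfolding A_def by (simp add: algebra_simps)
    finally show ?thesis .
  qed
  have "dpow f (Suc p) * (ep s * v) = qr (1 / of_nat (Suc p)) * (f * (dpow f p * (ep s * v)))"
    by (simp only: dpow_Suc' mult.assoc)
  also have "f * (dpow f p * (ep s * v)) = (\<Sum>t\<le>p. qr (L gchoose t) * (f * B t))"
    unfolding Suc.IH L_def B_def by (rule left_sum)
  also have "\<dots> = (\<Sum>t\<le>p. qr ((L gchoose t) * a t) * A t) + (\<Sum>t\<le>p. qr ((L gchoose t) * b t) * A (Suc t))"
    by (simp add: fB sum.distrib[symmetric] distrib_left qr_mult mult.assoc)
  also have "(\<Sum>t\<le>p. qr ((L gchoose t) * a t) * A t) = (\<Sum>u\<le>Suc p. qr ((L gchoose u) * a u) * A u)"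
    by (simp add: a_def)
  also have "(\<Sum>t\<le>p. qr ((L gchoose t) * b t) * A (Suc t))
      = (\<Sum>u\<le>Suc p. qr (if u = 0 then 0 else (L gchoose (u - 1)) * b (u - 1)) * A u)"
    by (simp only: sum.atMost_Suc_shift) simp
  also have "qr (1 / of_nat (Suc p)) * ((\<Sum>u\<le>Suc p. qr ((L gchoose u) * a u) * A u)
      + (\<Sum>u\<le>Suc p. qr (if u = 0 then 0 else (L gchoose (u - 1)) * b (u - 1)) * A u))
    = (\<Sum>u\<le>Suc p. qr (1 / of_nat (Suc p) * ((L gchoose u) * a u
         + (if u = 0 then 0 else (L gchoose (u - 1)) * b (u - 1)))) * A u)"
    by (simp only: lc_add lc_scale)
  also have "\<dots> = (\<Sum>u\<le>Suc p. qr ((L + 1) gchoose u) * A u)"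
  proof (rule sum.cong[OF refl])
    fix u assume "u \<in> {..Suc p}"
    then have "u \<le> Suc p" by simp
    from coef_id[OF this, of L] show "qr (1 / of_nat (Suc p) * ((L gchoose u) * a u
         + (if u = 0 then 0 else (L gchoose (u - 1)) * b (u - 1)))) * A u = qr ((L + 1) gchoose u) * A u"
      unfolding a_def b_def by simp
  qed
  finally show ?case unfolding L1 A_def .
qed

end



lemma tri: "(\<Sum>k\<le>n. \<Sum>t\<le>n-k. g k t) = (\<Sum>u\<le>(n::nat). \<Sum>k\<le>u. (g k (u - k) :: 'b::comm_monoid_add))"
proof -
  have "(\<Sum>k\<le>n. \<Sum>t\<le>n-k. g k t) = (\<Sum>(k,t)\<in>Sigma {..n} (\<lambda>k. {..n-k}). g k t)"
    by (rule sum.Sigma) auto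
  also have "Sigma {..n} (\<lambda>k. {..n-k}) = {(i,j). i+j \<le> n}" by auto
  also have "(\<Sum>(k,t)\<in>{(i,j). i+j \<le> n}. g k t) = (\<Sum>u\<le>n. \<Sum>k\<le>u. g k (u - k))"
    by (rule sum.triangle_reindex_eq)
  finally show ?thesis .
qed

lemma coef2: "(-1) ^ k * of_nat ((b + k) choose k) * (of_nat (N + k) gchoose (b + k))
   = (of_nat N gchoose b) * ((- of_nat N - 1) gchoose k :: rat)"
proof -
  have tr: "(of_nat (N + k) gchoose (b + k)) * (of_nat (b + k) gchoose k)
      = (of_nat (N + k) gchoose k) * ((of_nat (N + k) - of_nat k) gchoose (b + k - k) :: rat)"
    by (rule gbinomial_trinomial_revision) simp
  have ng: "(of_nat (N + k) gchoose k :: rat) = (-1) ^ k * ((- of_nat N - 1) gchoose k)"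
    using gbinomial_negated_upper[of "of_nat (N + k) :: rat" k] by simp
  have "(-1) ^ k * of_nat ((b + k) choose k) * (of_nat (N + k) gchoose (b + k))
      = (-1) ^ k * ((of_nat (N + k) gchoose (b + k)) * (of_nat (b + k) gchoose k) :: rat)"
    by (simp add: binomial_gbinomial mult.commute)
  also have "\<dots> = (-1) ^ k * ((-1) ^ k * ((- of_nat N - 1) gchoose k)) * (of_nat N gchoose b)"
    unfolding tr ng by simp
  also have "\<dots> = (of_nat N gchoose b) * ((- of_nat N - 1) gchoose k :: rat)"
    by (simp add: mult.assoc[symmetric] power_mult_distrib[symmetric])
  finally show ?thesis .
qed

context Bd begin

lemma qr_sum: "qr (\<Sum>k\<in>S. x k) = (\<Sum>k\<in>S. (qr (x k) :: 'a))"
  by (induction S rule: infinite_finite_induct) (simp_all add: qr_add)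

lemma ep_dpow: "k \<le> c \<Longrightarrow> ep (int c - int k) = dpow e (c - k)"
  unfolding ep_def by (simp add: nat_diff_distrib)

lemma Zv:
  assumes v: "wt j v" and abc: "a + b + c = d + 1"
  shows "(\<Sum>k\<le>min a c. qr ((-1) ^ k * of_nat ((b + k) choose k))
           * (dpow f (a - k) * binom H2 (b + k) * dpow e (c - k))) * v = 0"
proof -
  define \<beta> :: "nat \<Rightarrow> rat" where "\<beta> k = (-1) ^ k * of_nat ((b + k) choose k)" for k
  define \<gamma> :: "nat \<Rightarrow> rat" where "\<gamma> k = of_int (int d - (j + (int c - int k))) gchoose (b + k)" for k
  define T where "T k = dpow f (a - k) * (ep (int c - int k) * v)" for k
  have S1: "(\<Sum>k\<le>min a c. qr (\<beta> k) * (dpow f (a - k) * binom H2 (b + k) * dpow e (c - k))) * v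
      = (\<Sum>k\<le>min a c. qr (\<beta> k) * (dpow f (a - k) * (binom H2 (b + k) * (ep (int c - int k) * v))))"
    by (auto simp: sum_distrib_right mult.assoc ep_dpow intro!: sum.cong)
  also have "\<dots> = (\<Sum>k\<le>a. qr (\<beta> k) * (dpow f (a - k) * (binom H2 (b + k) * (ep (int c - int k) * v))))"
    by (rule sum.mono_neutral_left) (auto simp: ep_def)
  also have "\<dots> = (\<Sum>k\<le>a. qr (\<beta> k * \<gamma> k) * T k)"
  proof (rule sum.cong[OF refl])
    fix k
    have w: "wt (j + (int c - int k)) (ep (int c - int k) * v)" by (rule wt_ep[OF v])
    have "binom H2 (b + k) * (ep (int c - int k) * v) = qr (\<gamma> k) * (ep (int c - int k) * v)"
      unfolding \<gamma>_def by (rule binom_eig) (rule H2_wt[OF w])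
    then have "dpow f (a - k) * (binom H2 (b + k) * (ep (int c - int k) * v)) = qr (\<gamma> k) * T k"
      unfolding T_def by (simp only: qr_left)
    then show "qr (\<beta> k) * (dpow f (a - k) * (binom H2 (b + k) * (ep (int c - int k) * v))) = qr (\<beta> k * \<gamma> k) * T k"
      by (simp only: qr_mult mult.assoc)
  qed
  also have "\<dots> = 0"
  proof (cases "j \<ge> int a")
    case True
    show ?thesis
    proof (rule sum.neutral, rule ballI)
      fix k assume "k \<in> {..a}"
      show "qr (\<beta> k * \<gamma> k) * T k = 0"
      proof (cases "j + (int c - int k) > int d")
        case True
        have "ep (int c - int k) * v = 0" by (rule wt_vanish[OF wt_ep[OF v]]) (use True in simp)
        then show ?thesis unfolding T_def by simp
      next
        case False
        define N where "N = nat (int d - (j + (int c - int k)))"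
        have N1: "of_int (int d - (j + (int c - int k))) = (of_nat N :: rat)" using False unfolding N_def by simp
        have "N < b + k" using False True abc unfolding N_def by linarith
        then have "\<gamma> k = 0" unfolding \<gamma>_def N1 by (simp add: binomial_gbinomial[symmetric])
        then show ?thesis by simp
      qed
    qed
  next
    case False
    define Nn where "Nn = nat (int d - j - int c)"
    have hN: "int Nn = int d - j - int c" "int Nn \<ge> int b" using False abc unfolding Nn_def by linarith+
    define Rn where "Rn = nat (int a - j - 1)"
    have hR: "int Rn = int a - j - 1" using False unfolding Rn_def by linarith
    define L :: rat where "L = of_int (int d - 2 * j + int a - int c)"
    define \<kappa> :: "nat \<Rightarrow> rat" where "\<kappa> k = (of_nat Nn gchoose b) * ((- of_nat Nn - 1) gchoose k)" for k
    define Y where "Y u = ep (int c - int u) * (dpow f (a - u) * v)" for u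
    have bg: "\<beta> k * \<gamma> k = \<kappa> k" for k
    proof -
      have "(of_int (int d - (j + (int c - int k))) :: rat) = of_nat (Nn + k)"
        using hN by simp
      then show ?thesis unfolding \<beta>_def \<gamma>_def \<kappa>_def by (simp only: coef2)
    qed
    have KT: "T k = (\<Sum>t\<le>a-k. qr (L gchoose t) * Y (k + t))" if "k \<le> a" for k
    proof -
      have "T k = (\<Sum>t\<le>a-k. qr (of_int (int d - 2 * j + int (a - k) - (int c - int k)) gchoose t)
            * (ep (int c - int k - int t) * (dpow f (a - k - t) * v)))"
        unfolding T_def by (rule kostant[OF v])
      also have "\<dots> = (\<Sum>t\<le>a-k. qr (L gchoose t) * Y (k + t))"
        using that unfolding L_def Y_def by (intro sum.cong) (simp_all add: of_nat_diff algebra_simps)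
      finally show ?thesis .
    qed
    have "(\<Sum>k\<le>a. qr (\<beta> k * \<gamma> k) * T k) = (\<Sum>k\<le>a. \<Sum>t\<le>a-k. qr (\<kappa> k * (L gchoose t)) * Y (k + t))"
    proof (rule sum.cong[OF refl])
      fix k assume "k \<in> {..a}"
      then show "qr (\<beta> k * \<gamma> k) * T k = (\<Sum>t\<le>a-k. qr (\<kappa> k * (L gchoose t)) * Y (k + t))"
        by (simp only: bg KT lc_scale atMost_iff)
    qed
    also have "\<dots> = (\<Sum>u\<le>a. \<Sum>k\<le>u. qr (\<kappa> k * (L gchoose (u - k))) * Y (k + (u - k)))"
      by (rule tri)
    also have "\<dots> = (\<Sum>u\<le>a. qr (\<Sum>k\<le>u. \<kappa> k * (L gchoose (u - k))) * Y u)"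
    proof (rule sum.cong[OF refl])
      fix u
      have "(\<Sum>k\<le>u. qr (\<kappa> k * (L gchoose (u - k))) * Y (k + (u - k)))
          = (\<Sum>k\<le>u. qr (\<kappa> k * (L gchoose (u - k))) * Y u)"
        by (rule sum.cong[OF refl]) simp
      also have "\<dots> = qr (\<Sum>k\<le>u. \<kappa> k * (L gchoose (u - k))) * Y u"
        by (simp only: qr_sum sum_distrib_right)
      finally show "(\<Sum>k\<le>u. qr (\<kappa> k * (L gchoose (u - k))) * Y (k + (u - k)))
          = qr (\<Sum>k\<le>u. \<kappa> k * (L gchoose (u - k))) * Y u" .
    qed
    also have "\<dots> = (\<Sum>u\<le>a. qr ((of_nat Nn gchoose b) * of_nat (Rn choose u)) * Y u)"
    proof (intro sum.cong refl)
      fix u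
      have "(\<Sum>k\<le>u. \<kappa> k * (L gchoose (u - k)))
          = (of_nat Nn gchoose b) * (\<Sum>k=0..u. ((- of_nat Nn - 1) gchoose k) * (L gchoose (u - k)))"
        unfolding \<kappa>_def by (simp add: sum_distrib_left mult.assoc atMost_atLeast0)
      also have "\<dots> = (of_nat Nn gchoose b) * ((- of_nat Nn - 1 + L) gchoose u)"
        by (simp only: gbinomial_Vandermonde)
      also have "(- of_nat Nn - 1 + L) = (of_nat Rn :: rat)"
        unfolding L_def using hN hR by (simp add: algebra_simps)
      finally show "qr (\<Sum>k\<le>u. \<kappa> k * (L gchoose (u - k))) * Y u = qr ((of_nat Nn gchoose b) * of_nat (Rn choose u)) * Y u"
        by (simp add: binomial_gbinomial)
    qed
    also have "\<dots> = 0"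
    proof (rule sum.neutral, rule ballI)
      fix u assume "u \<in> {..a}"
      show "qr ((of_nat Nn gchoose b) * of_nat (Rn choose u)) * Y u = 0"
      proof (cases "u \<le> Rn")
        case True
        have "dpow f (a - u) * v = 0"
          by (rule wt_vanish[OF wt_df[OF v]]) (use True hR \<open>u \<in> {..a}\<close> in auto)
        then show ?thesis unfolding Y_def by simp
      next
        case False then show ?thesis by (simp add: binomial_eq_0)
      qed
    qed
    finally show ?thesis .
  qed
  finally show ?thesis unfolding \<beta>_def .
qed

end



context Bd begin

lemma Z2: "falling H2 (Suc d) = 0"
proof (rule peel)
  fix j v assume v: "wt j v"
  have "falling H2 (Suc d) * v = qr (\<Prod>i<Suc d. of_int (int d - j) - of_nat i) * v"
    by (rule falling_eig) (rule H2_wt[OF v])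
  also have "\<dots> = 0"
  proof (cases "0 \<le> j \<and> j \<le> int d")
    case True
    have "nat (int d - j) \<in> {..<Suc d}" using True by auto
    moreover have "(of_int (int d - j) - of_nat (nat (int d - j)) :: rat) = 0" using True by simp
    ultimately have "(\<Prod>i<Suc d. of_int (int d - j) - of_nat i :: rat) = 0"
      by (metis (no_types, lifting) finite_lessThan prod_zero_iff)
    then show ?thesis by (simp only: qr_0 mult_zero_left)
  next
    case False
    then have "v = 0" using wt_vanish[OF v] by linarith
    then show ?thesis by simp
  qed
  finally show "falling H2 (Suc d) * v = 0" .
qed

lemma swap: "Bd d f e H2 H1"
proof -
  have r: "H1 * H2 = H2 * H1" "H1 * e - e * H1 = e" "H1 * f - f * H1 = - f" "H2 * e - e * H2 = - e"
     "H2 * f - f * H2 = f" "e * f - f * e = H1 - H2" "H1 + H2 = of_nat d"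
    using R unfolding Bd_rel_def by auto
  have "Bd_rel d f e H2 H1"
    unfolding Bd_rel_def using r Z2 by (auto simp: add.commute) (metis minus_diff_eq)
  then show ?thesis using QA by (simp add: Bd_def)
qed

lemma ident1:
  assumes abc: "a + b + c = d + 1"
  shows "dpow f a * binom H2 b * dpow e c =
           (\<Sum>k = 1..min a c. of_int ((-1) ^ (k - 1)) * of_nat ((b + k) choose k)
              * dpow f (a - k) * binom H2 (b + k) * dpow e (c - k))"
proof -
  define X where "X k = dpow f (a - k) * binom H2 (b + k) * dpow e (c - k)" for k
  define g where "g k = qr ((-1) ^ k * of_nat ((b + k) choose k)) * X k" for k
  have Z: "(\<Sum>k\<le>min a c. g k) = 0"
  proof (rule peel)
    fix j v assume "wt j v"
    then show "(\<Sum>k\<le>min a c. g k) * v = 0" unfolding g_def X_def by (rule Zv[OF _ abc])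
  qed
  have sp: "(\<Sum>k\<le>min a c. g k) = g 0 + (\<Sum>k=1..min a c. g k)"
    by (simp add: atMost_atLeast0 sum.atLeast_Suc_atMost)
  have g0: "g 0 = dpow f a * binom H2 b * dpow e c" unfolding g_def X_def by simp
  have rh: "(\<Sum>k = 1..min a c. of_int ((-1) ^ (k - 1)) * of_nat ((b + k) choose k)
              * dpow f (a - k) * binom H2 (b + k) * dpow e (c - k)) = - (\<Sum>k=1..min a c. g k)"
  proof -
    have "of_int ((-1) ^ (k - 1)) * of_nat ((b + k) choose k) * dpow f (a - k) * binom H2 (b + k) * dpow e (c - k)
        = - g k" if k1: "k \<in> {1..min a c}" for k
    proof -
      obtain k' where k': "k = Suc k'" using k1 by (cases k) auto
      define C where "C = (b + k) choose k"
      have r1: "((-1) ^ k * of_nat C :: rat) = of_int ((-1) ^ k * int C)" by simp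
      have r2: "(of_int ((-1) ^ k * int C) :: 'a) = of_int ((-1) ^ k) * of_nat C"
        by (simp only: of_int_mult of_int_of_nat_eq)
      have r3: "((-1) ^ k :: int) = - ((-1) ^ (k - 1))" using k' by simp
      have "qr ((-1) ^ k * of_nat C) = (- (of_int ((-1) ^ (k - 1)) * of_nat C) :: 'a)"
        unfolding r1 qr_of_int r2 r3 by simp
      then show ?thesis unfolding g_def X_def C_def by (simp add: mult.assoc)
    qed
    then show ?thesis by (simp add: sum_negf)
  qed
  have "g 0 + (\<Sum>k=1..min a c. g k) = 0" using sp Z by simp
  then have "g 0 = - (\<Sum>k=1..min a c. g k)" by (simp add: eq_neg_iff_add_eq_0)
  then show ?thesis by (simp only: g0 rh)
qed

end

theorem theorem6p1:
  fixes e f H1 H2 :: "'a::ring_1" and d a b c :: nat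
  assumes "is_Q_algebra TYPE('a)"
    and "Bd_rel d e f H1 H2"
    and "a + b + c = d + 1"
  shows "(dpow f a * binom H2 b * dpow e c =
           (\<Sum>k = 1..min a c. of_int ((-1) ^ (k - 1)) * of_nat ((b + k) choose k)
              * dpow f (a - k) * binom H2 (b + k) * dpow e (c - k))) \<and>
         (dpow e a * binom H1 b * dpow f c =
           (\<Sum>k = 1..min a c. of_int ((-1) ^ (k - 1)) * of_nat ((b + k) choose k)
              * dpow e (a - k) * binom H1 (b + k) * dpow f (c - k)))"
proof -
  interpret B: Bd d e f H1 H2 using assms(1,2) by (simp add: Bd_def)
  interpret S: Bd d f e H2 H1 by (rule B.swap)
  show ?thesis using B.ident1[OF assms(3)] S.ident1[OF assms(3)] by blast
qed


end
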